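(* Let $R$ be as in the standing setup and let $I, J$ be nonzero ideals of $R$. Then $v(I+J)=v(I)\cup v(J)$ if and only if $v(I\cap J)=v(I)\cap v(J)$.
   Context: Standing setup: $k$ is a field and $R$ is a complete local domain with $k\subseteq R\subseteq k[[t]]$, residue field $k$, maximal ideal $m$, and nonzero conductor $(R:k[[t]])\neq 0$. Let $v$ denote the $t$-adic valuation on $k[[t]]$. For a nonzero ideal $I$ of $R$, $v(I)=\{v(a): a\in I, a\neq 0\}$. *)

theory Defs
  imports "HOL-Computational_Algebra.Formal_Power_Series"
begin

text \<open>k[[t]] is modelled by the type 'a fps with 'a a field; the t-adic valuation
  of a nonzero series is subdegree.\<close>

definition fps_subring :: "'a::field fps set \<Rightarrow> bool" where
  "fps_subring R \<longleftrightarrow> (\<forall>c. fps_const c \<in> R) \<and>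
     (\<forall>a\<in>R. \<forall>b\<in>R. a + b \<in> R \<and> a - b \<in> R \<and> a * b \<in> R)"

definition fps_ideal :: "'a::field fps set \<Rightarrow> 'a fps set \<Rightarrow> bool" where
  "fps_ideal R I \<longleftrightarrow> I \<subseteq> R \<and> 0 \<in> I \<and>
     (\<forall>a\<in>I. \<forall>b\<in>I. a + b \<in> I) \<and> (\<forall>r\<in>R. \<forall>a\<in>I. r * a \<in> I)"

text \<open>R is local with maximal ideal m and residue field k (the constants surject onto R/m).\<close>
definition local_res_field_k :: "'a::field fps set \<Rightarrow> 'a fps set \<Rightarrow> bool" where
  "local_res_field_k R m \<longleftrightarrow> fps_ideal R m \<and> m \<noteq> R \<and>
     (\<forall>x\<in>R. x \<notin> m \<longrightarrow> (\<exists>y\<in>R. x * y = 1)) \<and>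
     (\<forall>x\<in>R. \<exists>c. x - fps_const c \<in> m)"

definition conductor :: "'a::field fps set \<Rightarrow> 'a fps set" where
  "conductor R = {f. \<forall>g. f * g \<in> R}"

definition val_set :: "'a::field fps set \<Rightarrow> nat set" where
  "val_set I = subdegree ` (I - {0})"

definition ideal_sum :: "'a::field fps set \<Rightarrow> 'a fps set \<Rightarrow> 'a fps set" where
  "ideal_sum I J = {a + b | a b. a \<in> I \<and> b \<in> J}"

end

theory Submission
  imports Defs
begin

definition sp :: "'a::field fps set \<Rightarrow> bool" where
  "sp S \<longleftrightarrow> 0 \<in> S \<and> (\<forall>a\<in>S. \<forall>b\<in>S. a + b \<in> S) \<and> (\<forall>c. \<forall>a\<in>S. fps_const c * a \<in> S)"

definition lo :: "nat \<Rightarrow> 'a::field fps \<Rightarrow> bool" where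
  "lo n f \<longleftrightarrow> (\<forall>k<n. fps_nth f k = 0)"

lemma sp_add: "sp S \<Longrightarrow> a \<in> S \<Longrightarrow> b \<in> S \<Longrightarrow> a + b \<in> S"
  by (simp add: sp_def)
lemma sp_smult: "sp S \<Longrightarrow> a \<in> S \<Longrightarrow> fps_const c * a \<in> S"
  by (simp add: sp_def)
lemma sp_zero: "sp S \<Longrightarrow> 0 \<in> S"
  by (simp add: sp_def)
lemma sp_diff: "sp S \<Longrightarrow> a \<in> S \<Longrightarrow> b \<in> S \<Longrightarrow> a - b \<in> S"
proof -
  assume s: "sp S" "a \<in> S" "b \<in> S"
  have "fps_const (-1) * b \<in> S" using sp_smult[OF s(1) s(3)] .
  moreover have "fps_const (-1) * b = - b" by (rule fps_ext) simp
  ultimately have "a + (- b) \<in> S" using s sp_add[of S a "-b"] by simp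
  thus ?thesis by simp
qed

lemma kill:
  fixes x y :: "'a::field fps"
  assumes "y \<noteq> 0" "lo m x" "subdegree y = m"
  shows "lo (Suc m) (x - fps_const (fps_nth x m / fps_nth y m) * y)"
  unfolding lo_def
proof (intro allI impI)
  fix k assume k: "k < Suc m"
  have ym: "fps_nth y m \<noteq> 0" using assms(1,3) by auto
  show "fps_nth (x - fps_const (fps_nth x m / fps_nth y m) * y) k = 0"
  proof (cases "k < m")
    case True
    have "fps_nth x k = 0" using assms(2) True unfolding lo_def by blast
    moreover have "k < subdegree y" using True assms(3) by simp
    hence "fps_nth y k = 0" by (rule nth_less_subdegree_zero)
    ultimately show ?thesis by simp
  next
    case False
    hence "k = m" using k by simp
    then show ?thesis using ym by simp
  qed
qed

lemma lo_subdeg: "f \<noteq> 0 \<Longrightarrow> lo n f \<Longrightarrow> n \<le> subdegree f"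
  unfolding lo_def by (rule subdegree_geI) auto

lemma subdeg_lo: "lo (subdegree f) f"
  unfolding lo_def by auto

lemma zero_case: "sp I \<Longrightarrow> sp J \<Longrightarrow> \<exists>i\<in>I. \<exists>j\<in>J. (0::'a::field fps) = i + j \<and> lo n i"
  by (rule bexI[of _ 0], rule bexI[of _ 0]) (auto simp: lo_def sp_def)

lemma vs: "a \<in> I \<Longrightarrow> a \<noteq> 0 \<Longrightarrow> subdegree a \<in> val_set I"
  unfolding val_set_def by blast

lemma vs_E: "n \<in> val_set I \<Longrightarrow> (\<And>a. a \<in> I \<Longrightarrow> a \<noteq> 0 \<Longrightarrow> subdegree a = n \<Longrightarrow> P) \<Longrightarrow> P"
  unfolding val_set_def by blast

lemma main_dir1:
  fixes I J :: "'a::field fps set"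
  assumes I: "sp I" and J: "sp J" and TI: "\<And>f. lo N f \<Longrightarrow> f \<in> I" and TJ: "\<And>f. lo N f \<Longrightarrow> f \<in> J"
    and H: "val_set (I \<inter> J) = val_set I \<inter> val_set J"
  shows "a \<in> I \<Longrightarrow> b \<in> J \<Longrightarrow> a + b \<noteq> 0 \<Longrightarrow> subdegree (a + b) \<in> val_set I \<union> val_set J"
proof (induction "N - subdegree a" arbitrary: a b rule: less_induct)
  case (less a b)
  show ?case
  proof (cases "a = 0 \<or> b = 0")
    case True
    then show ?thesis using less.prems unfolding val_set_def by auto
  next
    case False
    hence a0: "a \<noteq> 0" and b0: "b \<noteq> 0" by auto
    show ?thesis
    proof (cases "N \<le> subdegree a")
      case True
      have "lo N a" unfolding lo_def using True by (auto intro!: nth_less_subdegree_zero)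
      hence "a \<in> J" using TJ by blast
      hence "a + b \<in> J" using sp_add[OF J] less.prems by blast
      then show ?thesis using less.prems unfolding val_set_def by auto
    next
      case Nlt: False
      show ?thesis
      proof (cases "subdegree a = subdegree b")
        case False
        show ?thesis
        proof (cases "subdegree a < subdegree b")
          case True
          hence "subdegree (a+b) = subdegree a" using subdegree_add_eq1 a0 by blast
          then show ?thesis using less.prems a0 unfolding val_set_def by auto
        next
          case False2: False
          hence "subdegree b < subdegree a" using False by auto
          hence "subdegree (a+b) = subdegree b" using subdegree_add_eq2 b0 by blast
          then show ?thesis using less.prems b0 unfolding val_set_def by auto
        qed
      next
        case True
        define n where "n = subdegree a"
        have "n \<in> val_set I \<inter> val_set J" using True less.prems a0 b0 vs[of a I] vs[of b J] n_def by auto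
        hence "n \<in> val_set (I \<inter> J)" using H by simp
        then obtain c where c0: "c \<in> I \<inter> J" "c \<noteq> 0" "subdegree c = n" by (rule vs_E)
        hence c: "c \<in> I" "c \<in> J" "c \<noteq> 0" "subdegree c = n" by simp_all
        define l where "l = fps_nth a n / fps_nth c n"
        define a' where "a' = a - fps_const l * c"
        define b' where "b' = b + fps_const l * c"
        have a'I: "a' \<in> I" unfolding a'_def using sp_diff[OF I less.prems(1) sp_smult[OF I c(1)]] .
        have b'J: "b' \<in> J" unfolding b'_def using sp_add[OF J less.prems(2) sp_smult[OF J c(2)]] .
        have ab: "a' + b' = a + b" unfolding a'_def b'_def by simp
        have lo': "lo (Suc n) a'" unfolding a'_def l_def
          using kill[OF c(3) _ c(4)] subdeg_lo[of a] n_def by simp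
        show ?thesis
        proof (cases "a' = 0")
          case True
          hence "a + b = b'" using ab by simp
          then show ?thesis using b'J less.prems unfolding val_set_def by auto
        next
          case False
          have "Suc n \<le> subdegree a'" using lo_subdeg[OF False lo'] .
          hence "N - subdegree a' < N - subdegree a" using Nlt n_def by auto
          from less.hyps[OF this a'I b'J] less.prems ab show ?thesis by simp
        qed
      qed
    qed
  qed
qed



lemma lo_mono: "lo n f \<Longrightarrow> m \<le> n \<Longrightarrow> lo m f"
  unfolding lo_def by auto
lemma lo_add: "lo n f \<Longrightarrow> lo n g \<Longrightarrow> lo n (f + g)"
  unfolding lo_def by auto
lemma lo_smult: "lo n f \<Longrightarrow> lo n (fps_const c * f)"
  unfolding lo_def by auto
lemma lo_zero: "lo n 0"
  unfolding lo_def by auto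

lemma main_dir2_aux:
  fixes I J :: "'a::field fps set"
  assumes I: "sp I" and J: "sp J" and TI: "\<And>f. lo N f \<Longrightarrow> f \<in> I" and TJ: "\<And>f. lo N f \<Longrightarrow> f \<in> J"
    and H: "val_set (ideal_sum I J) = val_set I \<union> val_set J"
  shows "x \<in> ideal_sum I J \<Longrightarrow> lo (Suc n) x \<Longrightarrow> \<exists>i\<in>I. \<exists>j\<in>J. x = i + j \<and> lo (Suc n) i"
proof (induction "N - subdegree x" arbitrary: x rule: less_induct)
  case (less x)
  show ?case
  proof (cases "x = 0")
    case True
    then show ?thesis using zero_case[OF I J] by simp
  next
    case x0: False
    show ?thesis
    proof (cases "N \<le> subdegree x")
      case True
      have "lo N x" unfolding lo_def using True by (auto intro!: nth_less_subdegree_zero)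
      hence "x \<in> I" using TI by blast
      then show ?thesis using less.prems sp_zero[OF J] by (intro bexI[of _ x] bexI[of _ 0]) auto
    next
      case Nlt: False
      define m where "m = subdegree x"
      have nm: "Suc n \<le> m" using lo_subdeg[OF x0 less.prems(2)] m_def by simp
      have "m \<in> val_set (ideal_sum I J)" using less.prems x0 m_def unfolding val_set_def by auto
      hence "m \<in> val_set I \<union> val_set J" using H by simp
      then obtain y where y: "y \<in> I \<or> y \<in> J" "y \<noteq> 0" "subdegree y = m" unfolding val_set_def by auto
      obtain i0 j0 where ij0: "i0 \<in> I" "j0 \<in> J" "x = i0 + j0" using less.prems(1) unfolding ideal_sum_def by auto
      define l where "l = fps_nth x m / fps_nth y m"
      define x' where "x' = x - fps_const l * y"
      have lox': "lo (Suc m) x'" unfolding x'_def l_def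
        using kill[OF y(2) _ y(3)] subdeg_lo[of x] m_def by simp
      have loy: "lo (Suc n) (fps_const l * y)" using lo_smult lo_mono subdeg_lo[of y] y(3) nm
        by (metis Suc_leD)
      have x'S: "x' \<in> ideal_sum I J"
      proof (cases "y \<in> I")
        case True
        have "x' = (i0 - fps_const l * y) + j0" unfolding x'_def using ij0 by simp
        moreover have "i0 - fps_const l * y \<in> I" using sp_diff[OF I ij0(1) sp_smult[OF I True]] .
        ultimately show ?thesis using ij0 unfolding ideal_sum_def by auto
      next
        case False
        hence yJ: "y \<in> J" using y by auto
        have "x' = i0 + (j0 - fps_const l * y)" unfolding x'_def using ij0 by simp
        moreover have "j0 - fps_const l * y \<in> J" using sp_diff[OF J ij0(2) sp_smult[OF J yJ]] .
        ultimately show ?thesis using ij0 unfolding ideal_sum_def by auto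
      qed
      have "\<exists>i\<in>I. \<exists>j\<in>J. x' = i + j \<and> lo (Suc n) i"
      proof (cases "x' = 0")
        case True
        then show ?thesis using zero_case[OF I J] by simp
      next
        case False
        have "Suc m \<le> subdegree x'" using lo_subdeg[OF False lox'] .
        hence "N - subdegree x' < N - subdegree x" using Nlt m_def by auto
        moreover have "lo (Suc n) x'" using lox' nm lo_mono by (metis le_SucI)
        ultimately show ?thesis using less.hyps x'S by blast
      qed
      then obtain i j where ij: "i \<in> I" "j \<in> J" "x' = i + j" "lo (Suc n) i" by blast
      have xe: "x = x' + fps_const l * y" unfolding x'_def by simp
      show ?thesis
      proof (cases "y \<in> I")
        case True
        have "x = (i + fps_const l * y) + j" using xe ij by (simp add: algebra_simps)
        moreover have "i + fps_const l * y \<in> I" using sp_add[OF I ij(1) sp_smult[OF I True]] .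
        moreover have "lo (Suc n) (i + fps_const l * y)" using lo_add[OF ij(4) loy] .
        ultimately show ?thesis using ij by blast
      next
        case False
        hence yJ: "y \<in> J" using y by auto
        have "x = i + (j + fps_const l * y)" using xe ij by (simp add: algebra_simps)
        moreover have "j + fps_const l * y \<in> J" using sp_add[OF J ij(2) sp_smult[OF J yJ]] .
        ultimately show ?thesis using ij by blast
      qed
    qed
  qed
qed

lemma main_dir2:
  fixes I J :: "'a::field fps set"
  assumes I: "sp I" and J: "sp J" and TI: "\<And>f. lo N f \<Longrightarrow> f \<in> I" and TJ: "\<And>f. lo N f \<Longrightarrow> f \<in> J"
    and H: "val_set (ideal_sum I J) = val_set I \<union> val_set J"
  shows "val_set (I \<inter> J) = val_set I \<inter> val_set J"
proof
  show "val_set (I \<inter> J) \<subseteq> val_set I \<inter> val_set J" unfolding val_set_def by auto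
next
  show "val_set I \<inter> val_set J \<subseteq> val_set (I \<inter> J)"
  proof
    fix n assume "n \<in> val_set I \<inter> val_set J"
    then obtain a b where ab: "a \<in> I" "a \<noteq> 0" "subdegree a = n" "b \<in> J" "b \<noteq> 0" "subdegree b = n"
      by (meson IntD1 IntD2 vs_E)
    define b' where "b' = fps_const (fps_nth a n / fps_nth b n) * b"
    have b'J: "b' \<in> J" unfolding b'_def using sp_smult[OF J ab(4)] .
    have "0 - b' \<in> J" using sp_diff[OF J sp_zero[OF J] b'J] .
    hence "a + (0 - b') \<in> ideal_sum I J" using ab unfolding ideal_sum_def by blast
    hence xS: "a - b' \<in> ideal_sum I J" by simp
    have lox: "lo (Suc n) (a - b')" unfolding b'_def
      using kill[OF ab(5) _ ab(6)] subdeg_lo[of a] ab(3) by simp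
    obtain i j where ij: "i \<in> I" "j \<in> J" "a - b' = i + j" "lo (Suc n) i"
      using main_dir2_aux[OF I J TI TJ H xS lox] by blast
    define c where "c = a - i"
    have cI: "c \<in> I" unfolding c_def using sp_diff[OF I ab(1) ij(1)] .
    have "c = b' + j" unfolding c_def using ij(3) by (simp add: algebra_simps)
    hence cJ: "c \<in> J" using sp_add[OF J b'J ij(2)] by simp
    have cn: "fps_nth c n \<noteq> 0" using ij(4) ab unfolding c_def lo_def by auto
    have loc: "lo n c" using ij(4) subdeg_lo[of a] ab(3) unfolding c_def lo_def by auto
    have c0: "c \<noteq> 0" using cn by auto
    have "subdegree c = n" using subdegree_leI[OF cn] lo_subdeg[OF c0 loc] by simp
    then show "n \<in> val_set (I \<inter> J)" using cI cJ c0 unfolding val_set_def by auto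
  qed
qed

lemma main_dir1':
  fixes I J :: "'a::field fps set"
  assumes I: "sp I" and J: "sp J" and TI: "\<And>f. lo N f \<Longrightarrow> f \<in> I" and TJ: "\<And>f. lo N f \<Longrightarrow> f \<in> J"
    and H: "val_set (I \<inter> J) = val_set I \<inter> val_set J"
  shows "val_set (ideal_sum I J) = val_set I \<union> val_set J"
proof
  show "val_set (ideal_sum I J) \<subseteq> val_set I \<union> val_set J"
  proof
    fix n assume "n \<in> val_set (ideal_sum I J)"
    then obtain a b where "a \<in> I" "b \<in> J" "a + b \<noteq> 0" "n = subdegree (a + b)"
      unfolding val_set_def ideal_sum_def by auto
    then show "n \<in> val_set I \<union> val_set J" using main_dir1[OF I J TI TJ H] by blast
  qed
next
  have "I \<subseteq> ideal_sum I J" using sp_zero[OF J] unfolding ideal_sum_def by force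
  moreover have "J \<subseteq> ideal_sum I J" using sp_zero[OF I] unfolding ideal_sum_def by force
  ultimately show "val_set I \<union> val_set J \<subseteq> val_set (ideal_sum I J)" unfolding val_set_def by auto
qed

lemma ideal_sp:
  fixes R I :: "'a::field fps set"
  assumes "fps_subring R" "fps_ideal R I"
  shows "sp I"
  using assms unfolding sp_def fps_subring_def fps_ideal_def by blast

lemma ideal_T:
  fixes R I :: "'a::field fps set"
  assumes "fps_subring R" "fps_ideal R I" "I \<noteq> {0}" "conductor R \<noteq> {0}"
  shows "\<exists>N. \<forall>h. lo N h \<longrightarrow> h \<in> I"
proof -
  have "fps_const 0 \<in> R" using assms(1) unfolding fps_subring_def by blast
  hence "0 \<in> R" by simp
  hence "0 \<in> conductor R" unfolding conductor_def by simp
  then obtain f where f: "f \<in> conductor R" "f \<noteq> 0" using assms(4) by blast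
  have "0 \<in> I" using assms(2) unfolding fps_ideal_def by blast
  then obtain a where a: "a \<in> I" "a \<noteq> 0" using assms(3) by blast
  have "\<forall>h. lo (subdegree (f * a)) h \<longrightarrow> h \<in> I"
  proof (intro allI impI)
    fix h :: "'a fps" assume lh: "lo (subdegree (f * a)) h"
    show "h \<in> I"
    proof (cases "h = 0")
      case True then show ?thesis using \<open>0 \<in> I\<close> by simp
    next
      case False
      have fa: "f * a \<noteq> 0" using f a by simp
      have "f * a dvd h" using fps_dvd_iff[OF fa False] lo_subdeg[OF False lh] by simp
      then obtain g where g: "h = f * a * g" by (rule dvdE)
      have "f * g \<in> R" using f(1) unfolding conductor_def by blast
      moreover have "\<forall>r\<in>R. \<forall>a\<in>I. r * a \<in> I" using assms(2) unfolding fps_ideal_def by blast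
      ultimately have "(f * g) * a \<in> I" using a(1) by blast
      then show ?thesis using g by (simp add: algebra_simps)
    qed
  qed
  then show ?thesis by blast
qed

theorem lemma1p1:
  fixes R m I J :: "'a::field fps set"
  assumes "fps_subring R"
    and "local_res_field_k R m"
    and "conductor R \<noteq> {0}"
    and "fps_ideal R I" and "I \<noteq> {0}"
    and "fps_ideal R J" and "J \<noteq> {0}"
  shows "val_set (ideal_sum I J) = val_set I \<union> val_set J \<longleftrightarrow>
         val_set (I \<inter> J) = val_set I \<inter> val_set J"
proof -
  have I: "sp I" and J: "sp J" using ideal_sp assms by blast+
  obtain N1 where N1: "\<forall>h. lo N1 h \<longrightarrow> h \<in> I" using ideal_T[of R I] assms by blast
  obtain N2 where N2: "\<forall>h. lo N2 h \<longrightarrow> h \<in> J" using ideal_T[of R J] assms by blast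
  have TI: "\<And>f. lo (N1 + N2) f \<Longrightarrow> f \<in> I" using N1 lo_mono[of "N1+N2" _ N1, OF _ le_add1] by blast
  have TJ: "\<And>f. lo (N1 + N2) f \<Longrightarrow> f \<in> J" using N2 lo_mono[of "N1+N2" _ N2, OF _ le_add2] by blast
  show ?thesis using main_dir1'[OF I J TI TJ] main_dir2[OF I J TI TJ] by blast
qed

end
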